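(* Every simple graph $G$ satisfies $\zeta(G)\leqslant \chi_a(G)$.
   Context: All graphs are finite and simple. A broken cycle in $G$ is a subgraph $C-e$, where $C$ is a cycle of $G$ and $e$ is an edge of $C$. An edge coloring of $G$ is strongly woody if no broken cycle is monochromatic. The strong arboricity $\zeta(G)$ is the least number of colors in a strongly woody edge coloring of $G$. The acyclic chromatic number $\chi_a(G)$ is the least number of colors in a proper vertex coloring of $G$ in which no cycle receives only two colors. *)

theory Defs
  imports Main
begin

definition simple_graph :: "'a set \<Rightarrow> 'a set set \<Rightarrow> bool" where
  "simple_graph V E \<longleftrightarrow> finite V \<and>
     (\<forall>e\<in>E. \<exists>u v. u \<noteq> v \<and> u \<in> V \<and> v \<in> V \<and> e = {u, v})"

definition is_cycle :: "'a set set \<Rightarrow> 'a list \<Rightarrow> bool" where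
  "is_cycle E vs \<longleftrightarrow> length vs \<ge> 3 \<and> distinct vs \<and>
     (\<forall>i < length vs. {vs ! i, vs ! ((i + 1) mod length vs)} \<in> E)"

definition cycle_edges :: "'a list \<Rightarrow> 'a set set" where
  "cycle_edges vs = {{vs ! i, vs ! ((i + 1) mod length vs)} | i. i < length vs}"

definition strongly_woody :: "'a set set \<Rightarrow> ('a set \<Rightarrow> nat) \<Rightarrow> bool" where
  "strongly_woody E c \<longleftrightarrow>
     (\<forall>vs e. is_cycle E vs \<and> e \<in> cycle_edges vs \<longrightarrow>
        \<not> (\<exists>col. \<forall>f \<in> cycle_edges vs - {e}. c f = col))"

definition strong_arboricity :: "'a set \<Rightarrow> 'a set set \<Rightarrow> nat" where
  "strong_arboricity V E =
     (LEAST k. \<exists>c :: 'a set \<Rightarrow> nat. (\<forall>e\<in>E. c e < k) \<and> strongly_woody E c)"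

definition acyclic_coloring :: "'a set \<Rightarrow> 'a set set \<Rightarrow> ('a \<Rightarrow> nat) \<Rightarrow> nat \<Rightarrow> bool" where
  "acyclic_coloring V E c k \<longleftrightarrow>
     (\<forall>v\<in>V. c v < k) \<and>
     (\<forall>u v. {u, v} \<in> E \<longrightarrow> c u \<noteq> c v) \<and>
     (\<forall>vs. is_cycle E vs \<longrightarrow> card (c ` set vs) > 2)"

definition acyclic_chromatic_number :: "'a set \<Rightarrow> 'a set set \<Rightarrow> nat" where
  "acyclic_chromatic_number V E = (LEAST k. \<exists>c. acyclic_coloring V E c k)"

end

theory Submission
  imports Defs
begin

lemma mod_cancel_nat: "((x::nat) + y) mod k = (z + y) mod k \<Longrightarrow> x mod k = z mod k"
proof (induction y)
  case 0 then show ?case by simp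
next
  case (Suc y)
  then show ?case by (simp add: mod_Suc split: if_splits)
qed

lemma cyc_adj_neq:
  assumes "is_cycle E vs" "i < length vs"
  shows "vs ! i \<noteq> vs ! ((i + 1) mod length vs)"
proof -
  have n: "length vs \<ge> 3" "distinct vs" using assms(1) unfolding is_cycle_def by auto
  have "i \<noteq> (i + 1) mod length vs"
  proof (cases "i + 1 < length vs")
    case True then show ?thesis by simp
  next
    case False
    then have "i + 1 = length vs" using assms(2) by simp
    then show ?thesis using n(1) by simp
  qed
  moreover have "(i + 1) mod length vs < length vs" using n(1) by (intro mod_less_divisor) linarith
  ultimately show ?thesis using n(2) assms(2) by (simp add: nth_eq_iff_index_eq)
qed

lemma cyc_vert_in_V:
  assumes "simple_graph V E" "is_cycle E vs" "i < length vs"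
  shows "vs ! i \<in> V"
proof -
  have "{vs ! i, vs ! ((i + 1) mod length vs)} \<in> E" using assms(2,3) unfolding is_cycle_def by auto
  then obtain u v where "u \<in> V" "v \<in> V" "{vs ! i, vs ! ((i + 1) mod length vs)} = {u, v}"
    using assms(1) unfolding simple_graph_def by blast
  then show ?thesis by (metis doubleton_eq_iff)
qed

lemma cyc_edge_neq:
  assumes "is_cycle E vs" "i < length vs" "j < length vs" "i \<noteq> j"
  shows "{vs ! i, vs ! ((i + 1) mod length vs)} \<noteq> {vs ! j, vs ! ((j + 1) mod length vs)}"
proof
  let ?n = "length vs"
  assume eq: "{vs ! i, vs ! ((i + 1) mod ?n)} = {vs ! j, vs ! ((j + 1) mod ?n)}"
  have n: "?n \<ge> 3" "distinct vs" using assms(1) unfolding is_cycle_def by auto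
  have "vs ! i \<noteq> vs ! j" using n(2) assms by (simp add: nth_eq_iff_index_eq)
  then have "vs ! i = vs ! ((j + 1) mod ?n) \<and> vs ! ((i + 1) mod ?n) = vs ! j"
    using eq by (metis doubleton_eq_iff)
  moreover have "(i + 1) mod ?n < ?n" "(j + 1) mod ?n < ?n" using n(1) by (intro mod_less_divisor, linarith)+
  ultimately have "i = (j + 1) mod ?n" "(i + 1) mod ?n = j"
    using nth_eq_iff_index_eq[OF n(2)] assms(2,3) by metis+
  then have "((j + 1) mod ?n + 1) mod ?n = j" by simp
  then have "(j + 2) mod ?n = j mod ?n" using assms(3)
    by (simp add: mod_Suc_eq)
  moreover have "(j + 2) mod ?n \<noteq> j mod ?n"
  proof (cases "j + 2 < ?n")
    case True then show ?thesis using assms(3) by simp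
  next
    case False
    have lt: "j + 2 - ?n < ?n" using assms(3) n(1) by linarith
    have "(j + 2) mod ?n = (j + 2 - ?n) mod ?n" using False by (simp add: le_mod_geq)
    then have "(j + 2) mod ?n = j + 2 - ?n" using lt by simp
    then show ?thesis using assms(3) n(1) False by simp
  qed
  ultimately show False by simp
qed

lemma woody:
  assumes sg: "simple_graph V E" and ac: "acyclic_coloring V E c k"
  shows "strongly_woody E (\<lambda>e. (\<Sum>x\<in>e. c x) mod k)"
  unfolding strongly_woody_def
proof (intro allI impI notI)
  fix vs e
  assume cy: "is_cycle E vs \<and> e \<in> cycle_edges vs"
  assume "\<exists>col. \<forall>f\<in>cycle_edges vs - {e}. (\<Sum>x\<in>f. c x) mod k = col"
  then obtain col where col: "\<forall>f\<in>cycle_edges vs - {e}. (\<Sum>x\<in>f. c x) mod k = col" by blast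
  let ?n = "length vs"
  have C: "is_cycle E vs" using cy by simp
  have n3: "?n \<ge> 3" using C unfolding is_cycle_def by auto
  obtain j where j: "j < ?n" "e = {vs ! j, vs ! ((j + 1) mod ?n)}"
    using cy unfolding cycle_edges_def by blast
  have ck: "\<And>i. i < ?n \<Longrightarrow> c (vs ! i) < k"
    using ac cyc_vert_in_V[OF sg C] unfolding acyclic_coloring_def by blast
  define w where "w t = vs ! ((j + 1 + t) mod ?n)" for t
  have edgecol: "(c (w t) + c (w (Suc t))) mod k = col" if "Suc t < ?n" for t
  proof -
    define i where "i = (j + 1 + t) mod ?n"
    have i: "i < ?n" using n3 unfolding i_def by (intro mod_less_divisor) linarith
    have ij: "i \<noteq> j"
    proof
      assume "i = j"
      then have "(j + 1 + t) mod ?n = j mod ?n" using j(1) i_def by simp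
      show False
      proof (cases "j + 1 + t < ?n")
        case True then show False using \<open>(j + 1 + t) mod ?n = j mod ?n\<close> j(1) by simp
      next
        case False
        then have "(j + 1 + t) mod ?n = j + 1 + t - ?n"
          using j(1) that by (simp add: le_mod_geq)
        then show False using \<open>(j + 1 + t) mod ?n = j mod ?n\<close> j(1) that by simp
      qed
    qed
    have wS: "w (Suc t) = vs ! ((i + 1) mod ?n)"
      unfolding w_def i_def by (simp add: mod_Suc_eq)
    have ww: "w t = vs ! i" unfolding w_def i_def by simp
    have mem: "{vs ! i, vs ! ((i + 1) mod ?n)} \<in> cycle_edges vs - {e}"
      using cyc_edge_neq[OF C i j(1) ij] i j(2) unfolding cycle_edges_def by blast
    have ne: "vs ! i \<noteq> vs ! ((i + 1) mod ?n)" using cyc_adj_neq[OF C i] .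
    have "(\<Sum>x\<in>{vs ! i, vs ! ((i + 1) mod ?n)}. c x) mod k = col" using col mem by blast
    then show ?thesis using ne ww wS by simp
  qed
  have wk: "c (w t) < k" for t
  proof -
    have "(j + 1 + t) mod ?n < ?n" using n3 by (intro mod_less_divisor) linarith
    then show ?thesis unfolding w_def using ck by blast
  qed
  have par: "t < ?n \<Longrightarrow> c (w t) = (if even t then c (w 0) else c (w 1))" for t
  proof (induction t rule: nat_less_induct)
    case (1 t)
    show ?case
    proof (cases t)
      case 0 then show ?thesis by simp
    next
      case (Suc t1)
      show ?thesis
      proof (cases t1)
        case 0 then show ?thesis using Suc by simp
      next
        case (Suc t2)
        have a: "(c (w t2) + c (w (Suc t2))) mod k = col" using edgecol "1.prems" Suc \<open>t = Suc t1\<close> by simp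
        have b: "(c (w (Suc t2)) + c (w (Suc (Suc t2)))) mod k = col" using edgecol "1.prems" Suc \<open>t = Suc t1\<close> by simp
        have "c (w t2) mod k = c (w (Suc (Suc t2))) mod k"
        proof -
          have "(c (w t2) + c (w (Suc t2))) mod k = (c (w (Suc (Suc t2))) + c (w (Suc t2))) mod k"
            using a b by (simp add: add.commute)
          then show ?thesis by (rule mod_cancel_nat)
        qed
        then have "c (w t2) = c (w (Suc (Suc t2)))" using wk by simp
        moreover have "c (w t2) = (if even t2 then c (w 0) else c (w 1))"
          using "1.IH" "1.prems" Suc \<open>t = Suc t1\<close> by simp
        ultimately show ?thesis using Suc \<open>t = Suc t1\<close> by simp
      qed
    qed
  qed
  have "c ` set vs \<subseteq> {c (w 0), c (w 1)}"
  proof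
    fix y assume "y \<in> c ` set vs"
    then obtain i where i: "i < ?n" "y = c (vs ! i)" by (auto simp: in_set_conv_nth)
    obtain t where t: "t < ?n" "(j + 1 + t) mod ?n = i"
    proof (cases "j < i")
      case True
      then show ?thesis using that[of "i - j - 1"] i by simp
    next
      case False
      have "j + 1 + (?n - j - 1 + i) = ?n + i" using j(1) by linarith
      then have "(j + 1 + (?n - j - 1 + i)) mod ?n = (?n + i) mod ?n" by (simp only:)
      also have "\<dots> = i" using i by simp
      finally show ?thesis using that[of "?n - j - 1 + i"] False j(1) by simp
    qed
    then have "y = c (w t)" using i unfolding w_def by simp
    then show "y \<in> {c (w 0), c (w 1)}" using par[OF t(1)] by (cases "even t") simp_all
  qed
  then have "card (c ` set vs) \<le> 2"
  proof -
    have "card {c (w 0), c (w 1)} \<le> 2" by (simp add: card_insert_if)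
    moreover have "card (c ` set vs) \<le> card {c (w 0), c (w 1)}"
      by (rule card_mono) (simp, fact)
    ultimately show ?thesis by linarith
  qed
  moreover have "card (c ` set vs) > 2" using ac C unfolding acyclic_coloring_def by blast
  ultimately show False by simp
qed

theorem mainTheorem1:
  fixes V :: "'a set" and E :: "'a set set"
  assumes "simple_graph V E"
  shows "strong_arboricity V E \<le> acyclic_chromatic_number V E"
proof -
  have fin: "finite V" using assms unfolding simple_graph_def by simp
  then obtain h where h: "bij_betw h V {0..<card V}" using ex_bij_betw_finite_nat by blast
  have "acyclic_coloring V E h (card V)"
    unfolding acyclic_coloring_def
  proof (intro conjI allI impI ballI)
    fix v assume "v \<in> V" then show "h v < card V" using h unfolding bij_betw_def by auto
  next
    fix u v assume "{u, v} \<in> E"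
    then obtain a b where "a \<noteq> b" "a \<in> V" "b \<in> V" "{u, v} = {a, b}"
      using assms unfolding simple_graph_def by blast
    then have "u \<in> V" "v \<in> V" "u \<noteq> v" by (auto simp: doubleton_eq_iff)
    then show "h u \<noteq> h v" using h unfolding bij_betw_def inj_on_def by blast
  next
    fix vs assume C: "is_cycle E vs"
    have "set vs \<subseteq> V" using cyc_vert_in_V[OF assms C] by (auto simp: in_set_conv_nth)
    then have "inj_on h (set vs)" using h unfolding bij_betw_def using inj_on_subset by blast
    then have "card (h ` set vs) = length vs" using C unfolding is_cycle_def
      by (simp add: card_image distinct_card)
    then show "card (h ` set vs) > 2" using C unfolding is_cycle_def by simp
  qed
  then have ex: "\<exists>k c. acyclic_coloring V E c k" by blast
  define k where "k = acyclic_chromatic_number V E"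
  have "\<exists>c. acyclic_coloring V E c k"
    unfolding k_def acyclic_chromatic_number_def by (rule LeastI_ex) (rule ex)
  then obtain c where ac: "acyclic_coloring V E c k" by blast
  have bound: "\<forall>e\<in>E. (\<Sum>x\<in>e. c x) mod k < k"
  proof
    fix e assume "e \<in> E"
    then obtain a b where "a \<in> V" using assms unfolding simple_graph_def by blast
    then have "c a < k" using ac unfolding acyclic_coloring_def by blast
    then have "k > 0" by simp
    then show "(\<Sum>x\<in>e. c x) mod k < k" by simp
  qed
  have "strong_arboricity V E \<le> k"
    unfolding strong_arboricity_def
    by (rule Least_le, rule exI[where x="\<lambda>e. (\<Sum>x\<in>e. c x) mod k"])
      (use bound woody[OF assms ac] in simp)
  then show ?thesis using k_def by simp
qed

end
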